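(* Let $r\in(R_c,R_0)$ and $\mathcal{F}\in\mathbb{R}$, and define $\kappa(s;r)=2(\mathcal{F}-\sigma(s;r))-(r-R(s))^2$ for $s>s_0$. Then $s\mapsto\kappa(s;r)$ is decreasing on $(s_0,s_-(r))$, increasing on $(s_-(r),s_+(r))$, and decreasing to $-\infty$ on $(s_+(r),+\infty)$.
   Context: Let $\omega:[0,1]\to\mathbb{R}$ be continuous, $\Omega(p)=\int_0^p\omega$, $s_0=\sqrt{\max_{[0,1]}2\Omega}$. For $s>s_0$: $H(p;s)=\int_0^p(s^2-2\Omega(\tau))^{-1/2}d\tau$, $d(s)=H(1;s)$, $R(s)=\tfrac12s^2-\Omega(1)+d(s)$. Let $s_c>s_0$ satisfy $\int_0^1(s_c^2-2\Omega)^{-3/2}dp=1$; $R$ decreases on $(s_0,s_c)$, increases to $+\infty$ on $(s_c,\infty)$; $R_c=R(s_c)$, $R_0=\lim_{s\to s_0+}R(s)\in(R_c,+\infty]$; for $r\in(R_c,R_0)$, $s_-(r)<s_c<s_+(r)$ are the two roots of $R(s)=r$. Also $\sigma(s;r)=\int_0^1\big(\frac{1}{2H_p(p;s)^2}-H(p;s)-\Omega(p)+\Omega(1)+r\big)H_p(p;s)\,dp$. In the paper $\mathcal{F}$ is the flow force constant of a given solution, but the statement holds for any fixed real $\mathcal{F}$. *)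

theory Defs
  imports "HOL-Analysis.Analysis"
begin

definition Omg :: "(real \<Rightarrow> real) \<Rightarrow> real \<Rightarrow> real" where
  "Omg \<omega> p = integral {0..p} \<omega>"

definition s0 :: "(real \<Rightarrow> real) \<Rightarrow> real" where
  "s0 \<omega> = sqrt (Sup ((\<lambda>p. 2 * Omg \<omega> p) ` {0..1}))"

definition Hp :: "(real \<Rightarrow> real) \<Rightarrow> real \<Rightarrow> real \<Rightarrow> real" where
  "Hp \<omega> p s = (s\<^sup>2 - 2 * Omg \<omega> p) powr (-1/2)"

definition H :: "(real \<Rightarrow> real) \<Rightarrow> real \<Rightarrow> real \<Rightarrow> real" where
  "H \<omega> p s = integral {0..p} (\<lambda>\<tau>. (s\<^sup>2 - 2 * Omg \<omega> \<tau>) powr (-1/2))"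

definition dd :: "(real \<Rightarrow> real) \<Rightarrow> real \<Rightarrow> real" where
  "dd \<omega> s = H \<omega> 1 s"

definition RR :: "(real \<Rightarrow> real) \<Rightarrow> real \<Rightarrow> real" where
  "RR \<omega> s = s\<^sup>2 / 2 - Omg \<omega> 1 + dd \<omega> s"

definition R0 :: "(real \<Rightarrow> real) \<Rightarrow> ereal" where
  "R0 \<omega> = Lim (at_right (s0 \<omega>)) (\<lambda>s. ereal (RR \<omega> s))"

definition sigma :: "(real \<Rightarrow> real) \<Rightarrow> real \<Rightarrow> real \<Rightarrow> real" where
  "sigma \<omega> s r = integral {0..1} (\<lambda>p.
     (1 / (2 * (Hp \<omega> p s)\<^sup>2) - H \<omega> p s - Omg \<omega> p + Omg \<omega> 1 + r) * Hp \<omega> p s)"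

definition kappa :: "(real \<Rightarrow> real) \<Rightarrow> real \<Rightarrow> real \<Rightarrow> real \<Rightarrow> real" where
  "kappa \<omega> F r s = 2 * (F - sigma \<omega> s r) - (r - RR \<omega> s)\<^sup>2"

end

theory Submission
  imports Defs "HOL-Real_Asymp.Real_Asymp"
begin


lemma Omg_cont:
  assumes cont: "continuous_on {0..1} \<omega>"
  shows "continuous_on {0..1} (Omg \<omega>)"
  unfolding Omg_def[abs_def]
  by (rule indefinite_integral_continuous_1[OF integrable_continuous_interval[OF cont]])

lemma Omg0: "Omg \<omega> 0 = 0" by (simp add: Omg_def)

lemma s0_props:
  assumes cont: "continuous_on {0..1} \<omega>"
  shows "s0 \<omega> \<ge> 0" "\<And>p. p \<in> {0..1} \<Longrightarrow> 2 * Omg \<omega> p \<le> (s0 \<omega>)\<^sup>2"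
proof -
  let ?S = "(\<lambda>p. 2 * Omg \<omega> p) ` {0..1}"
  have "compact ?S"
    by (intro compact_continuous_image continuous_intros Omg_cont[OF cont]) auto
  then have bdd: "bdd_above ?S" by (meson bounded_imp_bdd_above compact_imp_bounded)
  have z: "0 \<in> ?S" using Omg0 by force
  have sup0: "Sup ?S \<ge> 0" using cSup_upper[OF z bdd] .
  show "s0 \<omega> \<ge> 0" unfolding s0_def using sup0 by simp
  fix p :: real assume "p \<in> {0..1}"
  then have "2 * Omg \<omega> p \<le> Sup ?S" by (intro cSup_upper bdd) auto
  then show "2 * Omg \<omega> p \<le> (s0 \<omega>)\<^sup>2" unfolding s0_def using sup0 by simp
qed

lemma A_pos:
  assumes cont: "continuous_on {0..1} \<omega>" and s: "s0 \<omega> < s" and p: "p \<in> {0..1}"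
  shows "0 < s\<^sup>2 - 2 * Omg \<omega> p"
proof -
  have "(s0 \<omega>)\<^sup>2 < s\<^sup>2" using s s0_props(1)[OF cont] by (simp add: power_strict_mono)
  then show ?thesis using s0_props(2)[OF cont p] by linarith
qed

lemma s_pos:
  assumes cont: "continuous_on {0..1} \<omega>" and s: "s0 \<omega> < s"
  shows "0 < s" using s s0_props(1)[OF cont] by linarith

lemma G_deriv:
  assumes cont: "continuous_on {0..1} \<omega>" and s: "s0 \<omega> < s"
  shows "((\<lambda>s. integral {0..1} (\<lambda>p. (s\<^sup>2 - 2*Omg \<omega> p) powr c)) has_real_derivative
     integral {0..1} (\<lambda>p. c * (s\<^sup>2 - 2*Omg \<omega> p) powr (c-1) * (2 * s))) (at s)"
proof -
  let ?U = "{s0 \<omega><..}"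
  have oc: "continuous_on (?U \<times> {0..1}) (\<lambda>x. Omg \<omega> (snd x))"
    by (rule continuous_on_compose2[OF Omg_cont[OF cont] continuous_on_snd]) auto
  have D: "((\<lambda>s. integral (cbox 0 1) (\<lambda>p. (s\<^sup>2 - 2*Omg \<omega> p) powr c)) has_field_derivative
     integral (cbox 0 1) (\<lambda>p. c * (s\<^sup>2 - 2*Omg \<omega> p) powr (c-1) * (2 * s))) (at s within ?U)"
  proof (rule leibniz_rule_field_derivative[where fx = "\<lambda>s p. c * (s\<^sup>2 - 2*Omg \<omega> p) powr (c-1) * (2 * s)"])
    fix x t :: real assume x: "x \<in> ?U" and t: "t \<in> cbox 0 1"
    have pos: "0 < x\<^sup>2 - 2 * Omg \<omega> t" using A_pos[OF cont, of x t] x t by simp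
    have d1: "((\<lambda>x. x\<^sup>2 - 2*Omg \<omega> t) has_real_derivative 2 * x) (at x)"
      by (rule derivative_eq_intros refl | simp)+
    show "((\<lambda>x. (x\<^sup>2 - 2*Omg \<omega> t) powr c) has_field_derivative c * (x\<^sup>2 - 2*Omg \<omega> t) powr (c-1) * (2 * x)) (at x within ?U)"
      apply (rule has_field_derivative_at_within)
      using DERIV_fun_powr[OF d1 pos, of c] by simp
  next
    fix x :: real assume x: "x \<in> ?U"
    have nz: "\<forall>p\<in>{0..1}. x\<^sup>2 - 2*Omg \<omega> p \<noteq> 0"
      using A_pos[OF cont, of x] x by force
    have "continuous_on {0..1} (\<lambda>p. (x\<^sup>2 - 2*Omg \<omega> p) powr c)"
      by (intro continuous_on_powr continuous_intros Omg_cont[OF cont] nz)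
    then show "(\<lambda>p. (x\<^sup>2 - 2*Omg \<omega> p) powr c) integrable_on cbox 0 1"
      by (simp add: integrable_continuous_interval)
  next
    have nz: "\<forall>x\<in>?U \<times> {0..1}. (fst x)\<^sup>2 - 2*Omg \<omega> (snd x) \<noteq> 0"
    proof
      fix x :: "real \<times> real" assume "x \<in> ?U \<times> {0..1}"
      then show "(fst x)\<^sup>2 - 2*Omg \<omega> (snd x) \<noteq> 0"
        using A_pos[OF cont, of "fst x" "snd x"] by (cases x) auto
    qed
    have "continuous_on (?U \<times> {0..1}) (\<lambda>x. c * ((fst x)\<^sup>2 - 2*Omg \<omega> (snd x)) powr (c-1) * (2 * fst x))"
      by (intro continuous_on_powr continuous_intros oc nz)
    then show "continuous_on (?U \<times> cbox 0 1) (\<lambda>(x, t). c * (x\<^sup>2 - 2*Omg \<omega> t) powr (c-1) * (2 * x))"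
      by (simp add: case_prod_beta)
  next
    show "s \<in> ?U" using s by simp
  next
    show "convex ?U" by (rule convex_real_interval)
  qed
  have E: "at s within ?U = at s" using s by (intro at_within_open) auto
  show ?thesis using D unfolding E cbox_interval .
qed



definition Jf :: "(real \<Rightarrow> real) \<Rightarrow> real \<Rightarrow> real" where
  "Jf \<omega> s = integral {0..1} (\<lambda>p. (s\<^sup>2 - 2*Omg \<omega> p) powr (1/2))"
definition I3 :: "(real \<Rightarrow> real) \<Rightarrow> real \<Rightarrow> real" where
  "I3 \<omega> s = integral {0..1} (\<lambda>p. (s\<^sup>2 - 2*Omg \<omega> p) powr (-3/2))"

lemma dd_eq: "dd \<omega> s = integral {0..1} (\<lambda>p. (s\<^sup>2 - 2*Omg \<omega> p) powr (-1/2))"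
  by (simp add: dd_def H_def)

lemma cont_A_powr:
  assumes cont: "continuous_on {0..1} \<omega>" and s: "s0 \<omega> < s"
  shows "continuous_on {0..1} (\<lambda>p. (s\<^sup>2 - 2*Omg \<omega> p) powr c)"
proof -
  have nz: "\<forall>p\<in>{0..1}. s\<^sup>2 - 2*Omg \<omega> p \<noteq> 0"
    using A_pos[OF cont, of s] s by force
  show ?thesis by (intro continuous_on_powr continuous_intros Omg_cont[OF cont] nz)
qed

lemma J_deriv:
  assumes cont: "continuous_on {0..1} \<omega>" and s: "s0 \<omega> < s"
  shows "(Jf \<omega> has_real_derivative s * dd \<omega> s) (at s)"
proof -
  have e: "(\<lambda>p. 1/2 * (s\<^sup>2 - 2*Omg \<omega> p) powr (1/2-1) * (2 * s)) = (\<lambda>p. s * (s\<^sup>2 - 2*Omg \<omega> p) powr (-1/2))"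
    by (simp add: fun_eq_iff)
  show ?thesis using G_deriv[OF cont s, of "1/2"] unfolding Jf_def[abs_def] dd_eq e
    by simp
qed

lemma dd_deriv:
  assumes cont: "continuous_on {0..1} \<omega>" and s: "s0 \<omega> < s"
  shows "(dd \<omega> has_real_derivative - s * I3 \<omega> s) (at s)"
proof -
  have e: "(\<lambda>p. (-1/2) * (s\<^sup>2 - 2*Omg \<omega> p) powr (-1/2-1) * (2 * s)) = (\<lambda>p. (-s) * (s\<^sup>2 - 2*Omg \<omega> p) powr (-3/2))"
    by (simp add: fun_eq_iff)
  have "dd \<omega> = (\<lambda>s. integral {0..1} (\<lambda>p. (s\<^sup>2 - 2*Omg \<omega> p) powr (-1/2)))"
    using dd_eq by blast
  then show ?thesis using G_deriv[OF cont s, of "-1/2"] unfolding I3_def e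
    by simp
qed

lemma RR_deriv:
  assumes cont: "continuous_on {0..1} \<omega>" and s: "s0 \<omega> < s"
  shows "(RR \<omega> has_real_derivative s * (1 - I3 \<omega> s)) (at s)"
proof -
  have "RR \<omega> = (\<lambda>s. s\<^sup>2 / 2 - Omg \<omega> 1 + dd \<omega> s)" by (simp add: RR_def[abs_def])
  moreover have "((\<lambda>s. s\<^sup>2 / 2 - Omg \<omega> 1 + dd \<omega> s) has_real_derivative s - s * I3 \<omega> s) (at s)"
    by (rule derivative_eq_intros dd_deriv[OF cont s] refl | simp)+
  ultimately show ?thesis by (simp add: algebra_simps)
qed

lemma I3_strict:
  assumes cont: "continuous_on {0..1} \<omega>" and s: "s0 \<omega> < s" and st: "s < t"
  shows "I3 \<omega> t < I3 \<omega> s"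
proof -
  have t: "s0 \<omega> < t" using s st by simp
  let ?g = "\<lambda>p. (s\<^sup>2 - 2*Omg \<omega> p) powr (-3/2) - (t\<^sup>2 - 2*Omg \<omega> p) powr (-3/2)"
  have cg: "continuous_on {0..1} ?g"
    by (intro continuous_intros cont_A_powr[OF cont s] cont_A_powr[OF cont t])
  obtain p0 where p0: "p0 \<in> {0..1}" and min: "\<And>y. y \<in> {0..1} \<Longrightarrow> ?g p0 \<le> ?g y"
    using continuous_attains_inf[OF compact_Icc _ cg] by fastforce
  have gp: "?g p0 > 0"
  proof -
    have a: "0 < s\<^sup>2 - 2*Omg \<omega> p0" using A_pos[OF cont s p0] .
    have b: "s\<^sup>2 - 2*Omg \<omega> p0 < t\<^sup>2 - 2*Omg \<omega> p0"
      using st s_pos[OF cont s] by (simp add: power_strict_mono)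
    have "(t\<^sup>2 - 2*Omg \<omega> p0) powr (-3/2) < (s\<^sup>2 - 2*Omg \<omega> p0) powr (-3/2)"
      using powr_less_mono2_neg[of "-3/2" "s\<^sup>2 - 2*Omg \<omega> p0" "t\<^sup>2 - 2*Omg \<omega> p0"] a b by simp
    then show ?thesis by simp
  qed
  have "integral {0..1} (\<lambda>p::real. ?g p0) \<le> integral {0..1} ?g"
    apply (intro Henstock_Kurzweil_Integration.integral_le)
    using min integrable_continuous_interval[OF cg] by auto
  then have "0 < integral {0..1} ?g" using gp by simp
  also have "integral {0..1} ?g = I3 \<omega> s - I3 \<omega> t"
    unfolding I3_def
    by (intro integral_diff integrable_continuous_interval cont_A_powr[OF cont s] cont_A_powr[OF cont t])
  finally show ?thesis by simp
qed



lemma powr_facts: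
  fixes a :: real assumes a: "0 < a"
  shows "1 / (2 * (a powr (-1/2))\<^sup>2) = a / 2" "a * a powr (-1/2) = a powr (1/2)"
proof -
  have "(a powr (-1/2))\<^sup>2 = a powr (-1/2) * a powr (-1/2)" by (simp only: power2_eq_square)
  also have "\<dots> = a powr (-1/2 + -1/2)" by (rule powr_add[symmetric])
  also have "\<dots> = 1 / a" using a by (simp add: powr_minus_divide)
  finally show "1 / (2 * (a powr (-1/2))\<^sup>2) = a / 2" by simp
  have "a * a powr (-1/2) = a powr 1 * a powr (-1/2)" using a by simp
  also have "\<dots> = a powr (1 + -1/2)" by (rule powr_add[symmetric])
  finally show "a * a powr (-1/2) = a powr (1/2)" by simp
qed

lemma kappa_eq:
  assumes cont: "continuous_on {0..1} \<omega>" and s: "s0 \<omega> < s"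
  shows "kappa \<omega> F r s = 2 * F - 2 * Jf \<omega> s - (r - (s\<^sup>2 / 2 - Omg \<omega> 1))\<^sup>2"
proof -
  define h where "h = (\<lambda>p. (s\<^sup>2 - 2*Omg \<omega> p) powr (-1/2))"
  define Hf where "Hf = (\<lambda>p. H \<omega> p s)"
  define q where "q = s\<^sup>2 / 2 - Omg \<omega> 1"
  have ch: "continuous_on {0..1} h" unfolding h_def by (rule cont_A_powr[OF cont s])
  have Hf_eq: "Hf = (\<lambda>p. integral {0..p} h)" by (simp add: Hf_def H_def h_def fun_eq_iff)
  have d_eq: "dd \<omega> s = Hf 1" by (simp add: Hf_def dd_def)
  have Hf0: "Hf 0 = 0" by (simp add: Hf_eq)
  have DH: "(Hf has_field_derivative h x) (at x within {0..1})" if x: "x \<in> {0..1}" for x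
    unfolding Hf_eq has_real_derivative_iff_has_vector_derivative
    by (rule integral_has_vector_derivative[OF ch x])
  have "((\<lambda>p. Hf p * h p + h p * Hf p) has_integral ((\<lambda>p. Hf p * Hf p) 1 - (\<lambda>p. Hf p * Hf p) 0)) {0..1}"
  proof (rule fundamental_theorem_of_calculus[where f="\<lambda>p. Hf p * Hf p" and f'="\<lambda>p. Hf p * h p + h p * Hf p"])
    fix x :: real assume x: "x \<in> {0..1}"
    show "((\<lambda>p. Hf p * Hf p) has_vector_derivative Hf x * h x + h x * Hf x) (at x within {0..1})"
      unfolding has_real_derivative_iff_has_vector_derivative[symmetric]
      by (rule DERIV_mult'[OF DH[OF x] DH[OF x]])
  qed simp
  then have "((\<lambda>p. Hf p * h p + h p * Hf p) has_integral (Hf 1 * Hf 1)) {0..1}"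
    using Hf0 by simp
  from has_integral_mult_right[OF this, of "1/2"]
  have "((\<lambda>p. (1/2) * (Hf p * h p + h p * Hf p)) has_integral (1/2) * (Hf 1 * Hf 1)) {0..1}" .
  then have i2: "((\<lambda>p. Hf p * h p) has_integral (dd \<omega> s)\<^sup>2 / 2) {0..1}"
    by (simp add: d_eq power2_eq_square algebra_simps)
  have i1: "((\<lambda>p. (s\<^sup>2 - 2*Omg \<omega> p) powr (1/2)) has_integral Jf \<omega> s) {0..1}"
    unfolding Jf_def by (rule integrable_integral[OF integrable_continuous_interval[OF cont_A_powr[OF cont s]]])
  have i3: "(h has_integral dd \<omega> s) {0..1}"
    unfolding dd_eq h_def by (rule integrable_integral[OF integrable_continuous_interval[OF cont_A_powr[OF cont s]]])
  have iall: "((\<lambda>p. (s\<^sup>2 - 2*Omg \<omega> p) powr (1/2) - Hf p * h p + (r - q) * h p) has_integral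
       Jf \<omega> s - (dd \<omega> s)\<^sup>2 / 2 + (r - q) * dd \<omega> s) {0..1}"
    by (intro has_integral_add has_integral_diff i1 i2 has_integral_mult_right i3)
  have "sigma \<omega> s r = integral {0..1} (\<lambda>p. (s\<^sup>2 - 2*Omg \<omega> p) powr (1/2) - Hf p * h p + (r - q) * h p)"
    unfolding sigma_def
  proof (rule Henstock_Kurzweil_Integration.integral_cong)
    fix p :: real assume p: "p \<in> {0..1}"
    define a where "a = s\<^sup>2 - 2*Omg \<omega> p"
    have a: "0 < a" unfolding a_def by (rule A_pos[OF cont s p])
    have hp: "Hp \<omega> p s = a powr (-1/2)" by (simp add: Hp_def a_def)
    have hh: "h p = a powr (-1/2)" by (simp add: h_def a_def)
    have e1: "(s\<^sup>2 - 2*Omg \<omega> p) powr (1/2) = a powr (1/2)" by (simp add: a_def)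
    have e2: "Hf p = H \<omega> p s" by (simp add: Hf_def)
    have e3: "Omg \<omega> 1 = s\<^sup>2 / 2 - q" by (simp add: q_def)
    have e4: "Omg \<omega> p = (s\<^sup>2 - a) / 2" by (simp add: a_def)
    have "(1 / (2 * (Hp \<omega> p s)\<^sup>2) - H \<omega> p s - Omg \<omega> p + Omg \<omega> 1 + r) * Hp \<omega> p s =
      (a / 2 - H \<omega> p s - (s\<^sup>2 - a) / 2 + (s\<^sup>2 / 2 - q) + r) * a powr (-1/2)"
      by (simp only: hp powr_facts(1)[OF a] e3 e4)
    also have "\<dots> = a * a powr (-1/2) - H \<omega> p s * a powr (-1/2) + (r - q) * a powr (-1/2)"
      by (simp add: field_simps)
    also have "\<dots> = (s\<^sup>2 - 2*Omg \<omega> p) powr (1/2) - Hf p * h p + (r - q) * h p"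
      by (simp only: powr_facts(2)[OF a] e1 e2 hh)
    finally show "(1 / (2 * (Hp \<omega> p s)\<^sup>2) - H \<omega> p s - Omg \<omega> p + Omg \<omega> 1 + r) * Hp \<omega> p s =
      (s\<^sup>2 - 2*Omg \<omega> p) powr (1/2) - Hf p * h p + (r - q) * h p" .
  qed
  also have "\<dots> = Jf \<omega> s - (dd \<omega> s)\<^sup>2 / 2 + (r - q) * dd \<omega> s"
    using iall by (rule integral_unique)
  finally have sig: "sigma \<omega> s r = Jf \<omega> s - (dd \<omega> s)\<^sup>2 / 2 + (r - q) * dd \<omega> s" .
  have RR: "RR \<omega> s = q + dd \<omega> s" by (simp add: RR_def q_def)
  show ?thesis unfolding kappa_def sig RR q_def[symmetric]
    by (simp add: power2_eq_square algebra_simps)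
qed

lemma lim_aux: "filterlim (\<lambda>s::real. 2 * F - (r - (s\<^sup>2 / 2 - c))\<^sup>2) at_bot at_top"
  by real_asymp

lemma RR_dec:
  assumes cont: "continuous_on {0..1} \<omega>" and I: "I3 \<omega> sc = 1" and sc: "s0 \<omega> < sc"
    and x: "s0 \<omega> < x" and xy: "x < y" and y: "y \<le> sc"
  shows "RR \<omega> y < RR \<omega> x"
proof (rule DERIV_neg_imp_decreasing_open[OF xy, where f="RR \<omega>"])
  fix z assume z: "x < z" "z < y"
  have zs: "s0 \<omega> < z" using x z by simp
  have "I3 \<omega> sc < I3 \<omega> z" using I3_strict[OF cont zs] z y by simp
  then have "z * (1 - I3 \<omega> z) < 0" using s_pos[OF cont zs] I by (simp add: mult_pos_neg)
  then show "\<exists>d. DERIV (RR \<omega>) z :> d \<and> d < 0" using RR_deriv[OF cont zs] by blast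
next
  show "continuous_on {x..y} (RR \<omega>)"
  proof (rule DERIV_atLeastAtMost_imp_continuous_on)
    fix z assume "x \<le> z" "z \<le> y"
    then have "s0 \<omega> < z" using x by simp
    then show "\<exists>d. DERIV (RR \<omega>) z :> d" using RR_deriv[OF cont] by blast
  qed
qed

lemma RR_inc:
  assumes cont: "continuous_on {0..1} \<omega>" and I: "I3 \<omega> sc = 1" and sc: "s0 \<omega> < sc"
    and x: "sc \<le> x" and xy: "x < y"
  shows "RR \<omega> x < RR \<omega> y"
proof (rule DERIV_pos_imp_increasing_open[OF xy, where f="RR \<omega>"])
  fix z assume z: "x < z" "z < y"
  have zs: "s0 \<omega> < z" using x z sc by simp
  have "I3 \<omega> z < I3 \<omega> sc" using I3_strict[OF cont sc] z x by simp
  then have "z * (1 - I3 \<omega> z) > 0" using s_pos[OF cont zs] I by simp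
  then show "\<exists>d. DERIV (RR \<omega>) z :> d \<and> d > 0" using RR_deriv[OF cont zs] by blast
next
  show "continuous_on {x..y} (RR \<omega>)"
  proof (rule DERIV_atLeastAtMost_imp_continuous_on)
    fix z assume "x \<le> z" "z \<le> y"
    then have "s0 \<omega> < z" using x sc by simp
    then show "\<exists>d. DERIV (RR \<omega>) z :> d" using RR_deriv[OF cont] by blast
  qed
qed

lemma kappa_deriv:
  assumes cont: "continuous_on {0..1} \<omega>" and s: "s0 \<omega> < s"
  shows "(kappa \<omega> F r has_real_derivative 2 * s * (r - RR \<omega> s)) (at s)"
proof -
  let ?K = "\<lambda>s. 2 * F - 2 * Jf \<omega> s - (r - (s\<^sup>2 / 2 - Omg \<omega> 1))\<^sup>2"
  have ev: "eventually (\<lambda>x. kappa \<omega> F r x = ?K x) (nhds s)"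
  proof -
    have "eventually (\<lambda>x. x \<in> {s0 \<omega><..}) (nhds s)"
      using s by (intro eventually_nhds_in_open) auto
    then show ?thesis by eventually_elim (use kappa_eq[OF cont] in auto)
  qed
  have "(?K has_real_derivative 2 * s * (r - RR \<omega> s)) (at s)"
    by (auto intro!: derivative_eq_intros J_deriv[OF cont s] simp: RR_def algebra_simps power2_eq_square)
  then show ?thesis using DERIV_cong_ev[OF refl ev refl] by simp
qed

lemma Jf_nonneg:
  assumes cont: "continuous_on {0..1} \<omega>" and s: "s0 \<omega> < s"
  shows "0 \<le> Jf \<omega> s"
  unfolding Jf_def
  by (rule Henstock_Kurzweil_Integration.integral_nonneg[OF integrable_continuous_interval[OF cont_A_powr[OF cont s]]]) simp

theorem lemma3p7:
  fixes \<omega> :: "real \<Rightarrow> real" and sc r F sm sp :: real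
  assumes cont: "continuous_on {0..1} \<omega>"
    and sc_gt: "sc > s0 \<omega>"
    and sc_def: "integral {0..1} (\<lambda>p. (sc\<^sup>2 - 2 * Omg \<omega> p) powr (-3/2)) = 1"
    and r_gt: "r > RR \<omega> sc"
    and r_lt: "ereal r < R0 \<omega>"
    and sm: "s0 \<omega> < sm" "sm < sc" "RR \<omega> sm = r"
    and sp: "sc < sp" "RR \<omega> sp = r"
  shows "(\<forall>x y. s0 \<omega> < x \<and> x < y \<and> y < sm \<longrightarrow> kappa \<omega> F r y < kappa \<omega> F r x)
       \<and> (\<forall>x y. sm < x \<and> x < y \<and> y < sp \<longrightarrow> kappa \<omega> F r x < kappa \<omega> F r y)
       \<and> (\<forall>x y. sp < x \<and> x < y \<longrightarrow> kappa \<omega> F r y < kappa \<omega> F r x)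
       \<and> filterlim (kappa \<omega> F r) at_bot at_top"
proof (intro conjI allI impI)
  have I: "I3 \<omega> sc = 1" using sc_def by (simp add: I3_def)
  note dec = RR_dec[OF cont I sc_gt] and inc = RR_inc[OF cont I sc_gt]
  fix x y assume xy: "s0 \<omega> < x \<and> x < y \<and> y < sm"
  show "kappa \<omega> F r y < kappa \<omega> F r x"
  proof (rule DERIV_neg_imp_decreasing[where f="kappa \<omega> F r"])
    fix z assume z: "x \<le> z" "z \<le> y"
    have zs: "s0 \<omega> < z" using xy z by simp
    have "RR \<omega> sm < RR \<omega> z" using dec[OF zs, of sm] xy z sm by simp
    then have "2 * z * (r - RR \<omega> z) < 0" using s_pos[OF cont zs] sm by (simp add: mult_pos_neg)
    then show "\<exists>d. DERIV (kappa \<omega> F r) z :> d \<and> d < 0" using kappa_deriv[OF cont zs] by blast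
  qed (use xy in simp)
next
  have I: "I3 \<omega> sc = 1" using sc_def by (simp add: I3_def)
  note dec = RR_dec[OF cont I sc_gt] and inc = RR_inc[OF cont I sc_gt]
  fix x y assume xy: "sm < x \<and> x < y \<and> y < sp"
  show "kappa \<omega> F r x < kappa \<omega> F r y"
  proof (rule DERIV_pos_imp_increasing[where f="kappa \<omega> F r"])
    fix z assume z: "x \<le> z" "z \<le> y"
    have zs: "s0 \<omega> < z" using xy z sm by simp
    have "RR \<omega> z < r"
    proof (cases "z \<le> sc")
      case True
      then show ?thesis using dec[OF sm(1), of z] xy z sm by simp
    next
      case False
      then show ?thesis using inc[of z sp] xy z sp by simp
    qed
    then have "2 * z * (r - RR \<omega> z) > 0" using s_pos[OF cont zs] by simp
    then show "\<exists>d. DERIV (kappa \<omega> F r) z :> d \<and> d > 0" using kappa_deriv[OF cont zs] by blast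
  qed (use xy in simp)
next
  have I: "I3 \<omega> sc = 1" using sc_def by (simp add: I3_def)
  note dec = RR_dec[OF cont I sc_gt] and inc = RR_inc[OF cont I sc_gt]
  fix x y assume xy: "sp < x \<and> x < y"
  show "kappa \<omega> F r y < kappa \<omega> F r x"
  proof (rule DERIV_neg_imp_decreasing[where f="kappa \<omega> F r"])
    fix z assume z: "x \<le> z" "z \<le> y"
    have zs: "s0 \<omega> < z" using xy z sp sc_gt by simp
    have "RR \<omega> sp < RR \<omega> z" using inc[of sp z] xy z sp by simp
    then have "2 * z * (r - RR \<omega> z) < 0" using s_pos[OF cont zs] sp by (simp add: mult_pos_neg)
    then show "\<exists>d. DERIV (kappa \<omega> F r) z :> d \<and> d < 0" using kappa_deriv[OF cont zs] by blast
  qed (use xy in simp)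
next
  let ?g = "\<lambda>s::real. 2 * F - (r - (s\<^sup>2 / 2 - Omg \<omega> 1))\<^sup>2"
  have lim: "filterlim ?g at_bot at_top" by (rule lim_aux)
  have ev: "eventually (\<lambda>s. kappa \<omega> F r s \<le> ?g s) at_top"
    using eventually_gt_at_top[of "s0 \<omega>"]
  proof eventually_elim
    case (elim s)
    then show ?case using kappa_eq[OF cont elim, of F r] Jf_nonneg[OF cont elim] by simp
  qed
  show "filterlim (kappa \<omega> F r) at_bot at_top"
    unfolding filterlim_at_bot
  proof
    fix Z :: real
    have "eventually (\<lambda>s. ?g s \<le> Z) at_top" using lim unfolding filterlim_at_bot by blast
    with ev show "eventually (\<lambda>s. kappa \<omega> F r s \<le> Z) at_top"
      by eventually_elim simp
  qed
qed

end
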